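(* Let $\pi$ and $\tau$ be endhered patterns of the same size $p$ (identified with permutations of $\{1,\dots,p\}$). If $\pi=\operatorname{letw}(\tau)$ or $\pi=\operatorname{retw}(\tau)$, then for all integers $n,k,m$, $$a_{n,k,m}(\pi,\tau)=a_{n,k,m}(\tau,\pi).$$ In particular, $a_{n,k}(\pi)=a_{n,k}(\tau)$ for all $n,k$.
   Context: A matching of size $n$ is a set of $n$ arcs $(a,b)$ with $1\le a<b\le 2n$ such that each point of $\{1,\dots,2n\}$ belongs to exactly one arc; $a$ is the starting point and $b$ the ending point of the arc. An endhered pattern of size $p$ is a matching of size $p$ in which every starting point precedes every ending point, i.e. its starting points are $1,\dots,p$ and ending points $p+1,\dots,2p$; it is identified with the permutation $\pi=\pi_1\dots\pi_p$ where $\pi_t$ is the starting point of the arc whose ending point is $p+t$. A matching $\mu$ of size $n$ contains $\pi$ at position $(i+1,j+1)$ (integers $i\ge 0$, $j\ge i+p$) if for every $s=1,\dots,p$ the pair $(i+s,\,j+\pi^{-1}(s))$ is an arc of $\mu$, where $\pi^{-1}$ is the inverse permutation; i.e. the arcs starting at $i+1,\dots,i+p$ end exactly at $j+1,\dots,j+p$ and form the pattern $\pi$. The number of occurrences of $\pi$ in $\mu$ is the number of positions at which $\mu$ contains $\pi$. $a_{n,k}(\pi)$ is the number of matchings of size $n$ with exactly $k$ occurrences of $\pi$, and $a_{n,k,m}(\pi,\tau)$ is the number of matchings of size $n$ with exactly $k$ occurrences of $\pi$ and exactly $m$ occurrences of $\tau$. The left endhered twist $\operatorname{letw}$ (resp.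 right endhered twist $\operatorname{retw}$) transforms a matching by reversing every maximal run of consecutive positions that are all starting points (resp. all ending points): within a maximal run $[a,b]$ of starting (resp. ending) points, the arc that had its starting (resp. ending) point at $a+t$ gets it at $b-t$, other endpoints unchanged. Applied to an endhered pattern (viewed as a matching) these give again endhered patterns. *)

theory Defs
  imports Main
begin

definition is_matching :: "nat \<Rightarrow> (nat \<times> nat) set \<Rightarrow> bool" where
  "is_matching n M \<longleftrightarrow>
     (\<forall>(a,b)\<in>M. 1 \<le> a \<and> a < b \<and> b \<le> 2*n) \<and>
     (\<forall>x\<in>{1..2*n}. \<exists>!e\<in>M. fst e = x \<or> snd e = x)"

definition is_start :: "(nat \<times> nat) set \<Rightarrow> nat \<Rightarrow> bool" where
  "is_start M x \<longleftrightarrow> (\<exists>b. (x,b) \<in> M)"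

definition is_end :: "(nat \<times> nat) set \<Rightarrow> nat \<Rightarrow> bool" where
  "is_end M x \<longleftrightarrow> (\<exists>a. (a,x) \<in> M)"

definition run_of :: "(nat \<Rightarrow> bool) \<Rightarrow> nat \<Rightarrow> nat set" where
  "run_of P x = {y. \<forall>z\<in>{min x y..max x y}. P z}"

text \<open>Reversal of a position inside its maximal run [a,b]: a+t \<mapsto> b-t.\<close>
definition run_reflect :: "(nat \<Rightarrow> bool) \<Rightarrow> nat \<Rightarrow> nat" where
  "run_reflect P x = Min (run_of P x) + Max (run_of P x) - x"

definition letw :: "(nat \<times> nat) set \<Rightarrow> (nat \<times> nat) set" where
  "letw M = (\<lambda>(a,b). (run_reflect (is_start M) a, b)) ` M"

definition retw :: "(nat \<times> nat) set \<Rightarrow> (nat \<times> nat) set" where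
  "retw M = (\<lambda>(a,b). (a, run_reflect (is_end M) b)) ` M"

definition pattern_matching :: "nat \<Rightarrow> (nat \<Rightarrow> nat) \<Rightarrow> (nat \<times> nat) set" where
  "pattern_matching p \<pi> = {(\<pi> t, p + t) | t. t \<in> {1..p}}"

text \<open>M contains \<pi> at position (i+1,j+1).\<close>
definition contains_at :: "nat \<Rightarrow> (nat \<Rightarrow> nat) \<Rightarrow> (nat \<times> nat) set \<Rightarrow> nat \<Rightarrow> nat \<Rightarrow> bool" where
  "contains_at p \<pi> M i j \<longleftrightarrow> i + p \<le> j \<and>
     (\<forall>s\<in>{1..p}. (i + s, j + inv_into {1..p} \<pi> s) \<in> M)"

definition occurrences :: "nat \<Rightarrow> (nat \<Rightarrow> nat) \<Rightarrow> (nat \<times> nat) set \<Rightarrow> nat" where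
  "occurrences p \<pi> M = card {(i,j). contains_at p \<pi> M i j}"

definition a_nk :: "nat \<Rightarrow> (nat \<Rightarrow> nat) \<Rightarrow> nat \<Rightarrow> nat \<Rightarrow> nat" where
  "a_nk p \<pi> n k = card {M. is_matching n M \<and> occurrences p \<pi> M = k}"

definition a_nkm :: "nat \<Rightarrow> (nat \<Rightarrow> nat) \<Rightarrow> (nat \<Rightarrow> nat) \<Rightarrow> nat \<Rightarrow> nat \<Rightarrow> nat \<Rightarrow> nat" where
  "a_nkm p \<pi> \<tau> n k m = card {M. is_matching n M \<and> occurrences p \<pi> M = k \<and> occurrences p \<tau> M = m}"

end

theory Submission
  imports Defs
begin

lemma run_mem: "y \<in> run_of P x \<longleftrightarrow> (\<forall>z. min x y \<le> z \<and> z \<le> max x y \<longrightarrow> P z)"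
  by (auto simp: run_of_def)

lemma run_P: "y \<in> run_of P x \<Longrightarrow> P y"
  unfolding run_mem by (meson max.cobounded2 min.cobounded2)

lemma run_self: "P x \<Longrightarrow> x \<in> run_of P x"
  unfolding run_mem by (metis antisym max.idem min.idem)

lemma run_sym: "y \<in> run_of P x \<longleftrightarrow> x \<in> run_of P y"
  unfolding run_mem by (simp add: min.commute max.commute)

lemma run_interval:
  assumes "y \<in> run_of P x" "z \<in> run_of P x" "y \<le> w" "w \<le> z"
  shows "w \<in> run_of P x"
  unfolding run_mem
proof (intro allI impI)
  fix u assume u: "min x w \<le> u \<and> u \<le> max x w"
  show "P u"
  proof (cases "u \<le> x")
    case True
    then have "min x y \<le> u \<and> u \<le> max x y" using u assms(3) by auto
    then show ?thesis using assms(1) unfolding run_mem by blast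
  next
    case False
    then have "min x z \<le> u \<and> u \<le> max x z" using u assms(4) by auto
    then show ?thesis using assms(2) unfolding run_mem by blast
  qed
qed

lemma run_same:
  assumes "y \<in> run_of P x"
  shows "run_of P y = run_of P x"
proof safe
  fix w assume w: "w \<in> run_of P y"
  have x: "x \<in> run_of P y" using assms run_sym by metis
  show "w \<in> run_of P x" unfolding run_mem
  proof (intro allI impI)
    fix u assume "min x w \<le> u \<and> u \<le> max x w"
    then have "u \<in> run_of P y"
      using run_interval[OF x w] run_interval[OF w x] by (cases "x \<le> w") auto
    then show "P u" by (rule run_P)
  qed
next
  fix w assume w: "w \<in> run_of P x"
  show "w \<in> run_of P y" unfolding run_mem
  proof (intro allI impI)
    fix u assume "min y w \<le> u \<and> u \<le> max y w"
    then have "u \<in> run_of P x"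
      using run_interval[OF assms w] run_interval[OF w assms] by (cases "y \<le> w") auto
    then show "P u" by (rule run_P)
  qed
qed

lemma run_finite:
  assumes "\<And>x. P x \<Longrightarrow> x \<le> N"
  shows "finite (run_of P x)"
proof -
  have "run_of P x \<subseteq> {..N}" using assms run_P by blast
  then show ?thesis using finite_subset by blast
qed

locale bnd =
  fixes P :: "nat \<Rightarrow> bool" and N :: nat
  assumes bnd: "\<And>x. P x \<Longrightarrow> x \<le> N"
begin

lemma MinMax:
  assumes "P x"
  shows "Min (run_of P x) \<in> run_of P x" "Max (run_of P x) \<in> run_of P x"
    "Min (run_of P x) \<le> x" "x \<le> Max (run_of P x)"
proof -
  have f: "finite (run_of P x)" by (rule run_finite[OF bnd])
  have x: "x \<in> run_of P x" using assms by (rule run_self)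
  show "Min (run_of P x) \<in> run_of P x" "Max (run_of P x) \<in> run_of P x"
    "Min (run_of P x) \<le> x" "x \<le> Max (run_of P x)"
    using f x by (auto intro: Min_in Max_in)
qed

lemma rr_in:
  assumes "P x"
  shows "run_reflect P x \<in> run_of P x"
proof -
  note m = MinMax[OF assms]
  have "Min (run_of P x) \<le> run_reflect P x" "run_reflect P x \<le> Max (run_of P x)"
    using m unfolding run_reflect_def by auto
  then show ?thesis using run_interval[OF m(1) m(2)] by blast
qed

lemma rr_P: "P x \<Longrightarrow> P (run_reflect P x)"
  using rr_in run_P by blast

lemma rr_eq: "y \<in> run_of P x \<Longrightarrow> run_reflect P y = Min (run_of P x) + Max (run_of P x) - y"
  unfolding run_reflect_def using run_same by metis

lemma rr_invol:
  assumes "P x"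
  shows "run_reflect P (run_reflect P x) = x"
proof -
  note m = MinMax[OF assms]
  have "run_reflect P (run_reflect P x) = Min (run_of P x) + Max (run_of P x) - run_reflect P x"
    using rr_eq[OF rr_in[OF assms]] .
  then show ?thesis using m unfolding run_reflect_def by auto
qed

lemma rr_inj: "P x \<Longrightarrow> P y \<Longrightarrow> run_reflect P x = run_reflect P y \<Longrightarrow> x = y"
  using rr_invol by metis

end

lemma run_before:
  assumes "P a" "\<not> P b" "a < b" "y \<in> run_of P a"
  shows "y < b"
proof (rule ccontr)
  assume "\<not> y < b"
  then have "b \<in> run_of P a" using run_interval[OF run_self[of P, OF assms(1)] assms(4)] assms(3) by auto
  then show False using run_P assms(2) by blast
qed

lemma run_after:
  assumes "P b" "\<not> P a" "a < b" "y \<in> run_of P b"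
  shows "a < y"
proof (rule ccontr)
  assume "\<not> a < y"
  then have "a \<in> run_of P b" using run_interval[OF assms(4) run_self[of P, OF assms(1)]] assms(3) by auto
  then show False using run_P assms(2) by blast
qed


lemma match_arc: "is_matching n M \<Longrightarrow> (a,b) \<in> M \<Longrightarrow> 1 \<le> a \<and> a < b \<and> b \<le> 2*n"
  unfolding is_matching_def by blast

lemma match_touch_unique:
  assumes "is_matching n M" "e \<in> M" "e' \<in> M" "fst e = x \<or> snd e = x" "fst e' = x \<or> snd e' = x"
  shows "e = e'"
proof -
  obtain a b where e: "e = (a,b)" by force
  have "1 \<le> a \<and> a < b \<and> b \<le> 2*n" using match_arc[OF assms(1)] assms(2) e by blast
  then have "x \<in> {1..2*n}" using assms(4) e by auto
  then have "\<exists>!e\<in>M. fst e = x \<or> snd e = x" using assms(1) unfolding is_matching_def by blast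
  then show ?thesis using assms(2-5) by blast
qed

lemma match_fst: "is_matching n M \<Longrightarrow> (a,b) \<in> M \<Longrightarrow> (a,b') \<in> M \<Longrightarrow> b = b'"
  using match_touch_unique[of n M "(a,b)" "(a,b')" a] by auto

lemma match_snd: "is_matching n M \<Longrightarrow> (a,b) \<in> M \<Longrightarrow> (a',b) \<in> M \<Longrightarrow> a = a'"
  using match_touch_unique[of n M "(a,b)" "(a',b)" b] by auto

lemma match_not_end: "is_matching n M \<Longrightarrow> (a,b) \<in> M \<Longrightarrow> \<not> is_end M a"
  unfolding is_end_def
proof
  assume m: "is_matching n M" "(a,b) \<in> M" and "\<exists>c. (c, a) \<in> M"
  then obtain c where c: "(c,a) \<in> M" by blast
  have "(a,b) = (c,a)" using match_touch_unique[OF m(1) m(2) c, of a] by auto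
  then show False using match_arc[OF m] by auto
qed

lemma match_not_start: "is_matching n M \<Longrightarrow> (a,b) \<in> M \<Longrightarrow> \<not> is_start M b"
  unfolding is_start_def
proof
  assume m: "is_matching n M" "(a,b) \<in> M" and "\<exists>c. (b, c) \<in> M"
  then obtain c where c: "(b,c) \<in> M" by blast
  have "(a,b) = (b,c)" using match_touch_unique[OF m(1) m(2) c, of b] by auto
  then show False using match_arc[OF m] by auto
qed

lemma start_bnd: "is_matching n M \<Longrightarrow> is_start M x \<Longrightarrow> 1 \<le> x \<and> x \<le> 2*n"
  unfolding is_start_def using match_arc by fastforce

lemma end_bnd: "is_matching n M \<Longrightarrow> is_end M x \<Longrightarrow> 1 \<le> x \<and> x \<le> 2*n"
  unfolding is_end_def using match_arc by fastforce

lemma bnd_start: "is_matching n M \<Longrightarrow> bnd (is_start M) (2*n)"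
  unfolding bnd_def using start_bnd by blast

lemma bnd_end: "is_matching n M \<Longrightarrow> bnd (is_end M) (2*n)"
  unfolding bnd_def using end_bnd by blast

lemma letw_mem: "(x,b) \<in> letw M \<longleftrightarrow> (\<exists>a. (a,b) \<in> M \<and> x = run_reflect (is_start M) a)"
  unfolding letw_def by force

lemma retw_mem: "(a,y) \<in> retw M \<longleftrightarrow> (\<exists>b. (a,b) \<in> M \<and> y = run_reflect (is_end M) b)"
  unfolding retw_def by force

lemma letw_start:
  assumes m: "is_matching n M"
  shows "is_start (letw M) = is_start M"
proof
  fix x
  interpret bnd "is_start M" "2*n" by (rule bnd_start[OF m])
  show "is_start (letw M) x = is_start M x"
  proof
    assume "is_start (letw M) x"
    then obtain a b where "(a,b) \<in> M" "x = run_reflect (is_start M) a"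
      unfolding is_start_def letw_mem by blast
    then show "is_start M x" using rr_P unfolding is_start_def by blast
  next
    assume x: "is_start M x"
    define a where "a = run_reflect (is_start M) x"
    have "is_start M a" using rr_P[OF x] a_def by simp
    then obtain b where "(a,b) \<in> M" unfolding is_start_def by blast
    moreover have "x = run_reflect (is_start M) a" using rr_invol[OF x] a_def by simp
    ultimately show "is_start (letw M) x" unfolding is_start_def letw_mem by blast
  qed
qed

lemma retw_end:
  assumes m: "is_matching n M"
  shows "is_end (retw M) = is_end M"
proof
  fix x
  interpret bnd "is_end M" "2*n" by (rule bnd_end[OF m])
  show "is_end (retw M) x = is_end M x"
  proof
    assume "is_end (retw M) x"
    then obtain a b where "(a,b) \<in> M" "x = run_reflect (is_end M) b"
      unfolding is_end_def retw_mem by blast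
    then show "is_end M x" using rr_P unfolding is_end_def by blast
  next
    assume x: "is_end M x"
    define b where "b = run_reflect (is_end M) x"
    have "is_end M b" using rr_P[OF x] b_def by simp
    then obtain a where "(a,b) \<in> M" unfolding is_end_def by blast
    moreover have "x = run_reflect (is_end M) b" using rr_invol[OF x] b_def by simp
    ultimately show "is_end (retw M) x" unfolding is_end_def retw_mem by blast
  qed
qed

lemma letw_invol:
  assumes m: "is_matching n M"
  shows "letw (letw M) = M"
proof -
  interpret bnd "is_start M" "2*n" by (rule bnd_start[OF m])
  have "\<And>a b. (a,b) \<in> letw (letw M) \<longleftrightarrow> (a,b) \<in> M"
  proof
    fix a b assume "(a,b) \<in> letw (letw M)"
    then obtain c where c: "(c,b) \<in> M" "a = run_reflect (is_start M) (run_reflect (is_start M) c)"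
      unfolding letw_mem letw_start[OF m] by blast
    have "is_start M c" using c(1) unfolding is_start_def by blast
    then show "(a,b) \<in> M" using c rr_invol by simp
  next
    fix a b assume ab: "(a,b) \<in> M"
    then have "is_start M a" unfolding is_start_def by blast
    then show "(a,b) \<in> letw (letw M)"
      unfolding letw_mem letw_start[OF m] using ab rr_invol by metis
  qed
  then show ?thesis by auto
qed

lemma retw_invol:
  assumes m: "is_matching n M"
  shows "retw (retw M) = M"
proof -
  interpret bnd "is_end M" "2*n" by (rule bnd_end[OF m])
  have "\<And>a b. (a,b) \<in> retw (retw M) \<longleftrightarrow> (a,b) \<in> M"
  proof
    fix a b assume "(a,b) \<in> retw (retw M)"
    then obtain c where c: "(a,c) \<in> M" "b = run_reflect (is_end M) (run_reflect (is_end M) c)"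
      unfolding retw_mem retw_end[OF m] by blast
    have "is_end M c" using c(1) unfolding is_end_def by blast
    then show "(a,b) \<in> M" using c rr_invol by simp
  next
    fix a b assume ab: "(a,b) \<in> M"
    then have "is_end M b" unfolding is_end_def by blast
    then show "(a,b) \<in> retw (retw M)"
      unfolding retw_mem retw_end[OF m] using ab rr_invol by metis
  qed
  then show ?thesis by auto
qed


lemma letw_matching:
  assumes m: "is_matching n M"
  shows "is_matching n (letw M)"
proof -
  interpret bnd "is_start M" "2*n" by (rule bnd_start[OF m])
  let ?r = "run_reflect (is_start M)"
  have arc: "1 \<le> x \<and> x < b \<and> b \<le> 2*n" if xb: "(x,b) \<in> letw M" for x b
  proof -
    obtain a where a: "(a,b) \<in> M" "x = ?r a" using xb unfolding letw_mem by blast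
    have sa: "is_start M a" using a(1) unfolding is_start_def by blast
    have "is_start M x" using rr_P[OF sa] a(2) by simp
    then have "1 \<le> x" using start_bnd[OF m] by blast
    moreover have "x < b"
      using run_before[OF sa match_not_start[OF m a(1)] _ rr_in[OF sa]] match_arc[OF m a(1)] a(2)
      by simp
    ultimately show ?thesis using match_arc[OF m a(1)] by simp
  qed
  have ex: "\<exists>e\<in>letw M. fst e = x \<or> snd e = x" if x: "x \<in> {1..2*n}" for x
  proof -
    obtain e where e: "e \<in> M" "fst e = x \<or> snd e = x" using m x unfolding is_matching_def by blast
    obtain a b where ab: "e = (a,b)" by force
    show ?thesis
    proof (cases "snd e = x")
      case True
      have "(?r a, b) \<in> letw M" using e ab unfolding letw_mem by blast
      then show ?thesis using True ab by force
    next
      case False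
      then have ax: "a = x" using e ab by simp
      have sx: "is_start M x" using e ab ax unfolding is_start_def by auto
      then have "is_start M (?r x)" by (rule rr_P)
      then obtain b0 where b0: "(?r x, b0) \<in> M" unfolding is_start_def by blast
      have "(?r (?r x), b0) \<in> letw M" using b0 unfolding letw_mem by blast
      then have "(x, b0) \<in> letw M" using rr_invol[OF sx] by simp
      then show ?thesis by force
    qed
  qed
  have un: "e1 = e2" if th: "e1 \<in> letw M" "e2 \<in> letw M" "fst e1 = x \<or> snd e1 = x" "fst e2 = x \<or> snd e2 = x" for e1 e2 x
  proof -
    obtain x1 b1 x2 b2 where e: "e1 = (x1,b1)" "e2 = (x2,b2)" by force
    obtain a1 where a1: "(a1,b1) \<in> M" "x1 = ?r a1" using th(1)[unfolded e] unfolding letw_mem by blast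
    obtain a2 where a2: "(a2,b2) \<in> M" "x2 = ?r a2" using th(2)[unfolded e] unfolding letw_mem by blast
    have s1: "is_start M a1" using a1 unfolding is_start_def by blast
    have s2: "is_start M a2" using a2 unfolding is_start_def by blast
    have sx1: "is_start M x1" using rr_P[OF s1] a1 by simp
    have sx2: "is_start M x2" using rr_P[OF s2] a2 by simp
    have n1: "\<not> is_start M b1" using match_not_start[OF m a1(1)] .
    have n2: "\<not> is_start M b2" using match_not_start[OF m a2(1)] .
    consider "x1 = x2" | "b1 = b2" using th(3,4) e sx1 sx2 n1 n2 by auto
    then show ?thesis
    proof cases
      case 1
      then have "a1 = a2" using rr_inj[OF s1 s2] a1 a2 by simp
      then show ?thesis using match_fst[OF m] a1 a2 e 1 by blast
    next
      case 2
      then have "a1 = a2" using match_snd[OF m] a1 a2 by blast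
      then show ?thesis using a1 a2 e 2 by simp
    qed
  qed
  show ?thesis unfolding is_matching_def
  proof (intro conjI ballI)
    show "\<And>x. x \<in> letw M \<Longrightarrow> case x of (a, b) \<Rightarrow> 1 \<le> a \<and> a < b \<and> b \<le> 2 * n"
      using arc by auto
    fix x assume "x \<in> {1..2*n}"
    then show "\<exists>!e. e \<in> letw M \<and> (fst e = x \<or> snd e = x)" using ex un by blast
  qed
qed

lemma retw_matching:
  assumes m: "is_matching n M"
  shows "is_matching n (retw M)"
proof -
  interpret bnd "is_end M" "2*n" by (rule bnd_end[OF m])
  let ?r = "run_reflect (is_end M)"
  have arc: "1 \<le> a \<and> a < y \<and> y \<le> 2*n" if xb: "(a,y) \<in> retw M" for a y
  proof -
    obtain b where b: "(a,b) \<in> M" "y = ?r b" using xb unfolding retw_mem by blast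
    have sb: "is_end M b" using b(1) unfolding is_end_def by blast
    have "is_end M y" using rr_P[OF sb] b(2) by simp
    then have "y \<le> 2*n" using end_bnd[OF m] by blast
    moreover have "a < y"
      using run_after[OF sb match_not_end[OF m b(1)] _ rr_in[OF sb]] match_arc[OF m b(1)] b(2)
      by simp
    ultimately show ?thesis using match_arc[OF m b(1)] by simp
  qed
  have ex: "\<exists>e\<in>retw M. fst e = x \<or> snd e = x" if x: "x \<in> {1..2*n}" for x
  proof -
    obtain e where e: "e \<in> M" "fst e = x \<or> snd e = x" using m x unfolding is_matching_def by blast
    obtain a b where ab: "e = (a,b)" by force
    show ?thesis
    proof (cases "fst e = x")
      case True
      have "(a, ?r b) \<in> retw M" using e ab unfolding retw_mem by blast
      then show ?thesis using True ab by force
    next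
      case False
      then have bx: "b = x" using e ab by simp
      have sx: "is_end M x" using e ab bx unfolding is_end_def by auto
      then have "is_end M (?r x)" by (rule rr_P)
      then obtain a0 where a0: "(a0, ?r x) \<in> M" unfolding is_end_def by blast
      have "(a0, ?r (?r x)) \<in> retw M" using a0 unfolding retw_mem by blast
      then have "(a0, x) \<in> retw M" using rr_invol[OF sx] by simp
      then show ?thesis by force
    qed
  qed
  have un: "e1 = e2" if th: "e1 \<in> retw M" "e2 \<in> retw M" "fst e1 = x \<or> snd e1 = x" "fst e2 = x \<or> snd e2 = x" for e1 e2 x
  proof -
    obtain x1 b1 x2 b2 where e: "e1 = (x1,b1)" "e2 = (x2,b2)" by force
    obtain a1 where a1: "(x1,a1) \<in> M" "b1 = ?r a1" using th(1)[unfolded e] unfolding retw_mem by blast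
    obtain a2 where a2: "(x2,a2) \<in> M" "b2 = ?r a2" using th(2)[unfolded e] unfolding retw_mem by blast
    have s1: "is_end M a1" using a1 unfolding is_end_def by blast
    have s2: "is_end M a2" using a2 unfolding is_end_def by blast
    have sx1: "is_end M b1" using rr_P[OF s1] a1 by simp
    have sx2: "is_end M b2" using rr_P[OF s2] a2 by simp
    have n1: "\<not> is_end M x1" using match_not_end[OF m a1(1)] .
    have n2: "\<not> is_end M x2" using match_not_end[OF m a2(1)] .
    consider "b1 = b2" | "x1 = x2" using th(3,4) e sx1 sx2 n1 n2 by auto
    then show ?thesis
    proof cases
      case 1
      then have "a1 = a2" using rr_inj[OF s1 s2] a1 a2 by simp
      then show ?thesis using match_snd[OF m] a1 a2 e 1 by blast
    next
      case 2
      then have "a1 = a2" using match_fst[OF m] a1 a2 by blast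
      then show ?thesis using a1 a2 e 2 by simp
    qed
  qed
  show ?thesis unfolding is_matching_def
  proof (intro conjI ballI)
    show "\<And>x. x \<in> retw M \<Longrightarrow> case x of (a, b) \<Rightarrow> 1 \<le> a \<and> a < b \<and> b \<le> 2 * n"
      using arc by auto
    fix x assume "x \<in> {1..2*n}"
    then show "\<exists>!e. e \<in> retw M \<and> (fst e = x \<or> snd e = x)" using ex un by blast
  qed
qed


definition cont :: "nat \<Rightarrow> (nat \<Rightarrow> nat) \<Rightarrow> (nat \<times> nat) set \<Rightarrow> nat \<Rightarrow> nat \<Rightarrow> bool" where
  "cont p \<sigma> M i j \<longleftrightarrow> i + p \<le> j \<and> (\<forall>t\<in>{1..p}. (i + \<sigma> t, j + t) \<in> M)"

lemma cont_eq:
  assumes b: "bij_betw \<sigma> {1..p} {1..p}"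
  shows "contains_at p \<sigma> M i j = cont p \<sigma> M i j"
proof -
  have inj: "inj_on \<sigma> {1..p}" and sur: "\<sigma> ` {1..p} = {1..p}"
    using b by (auto simp: bij_betw_def)
  have "(\<forall>s\<in>{1..p}. (i + s, j + inv_into {1..p} \<sigma> s) \<in> M) \<longleftrightarrow> (\<forall>t\<in>{1..p}. (i + \<sigma> t, j + t) \<in> M)"
  proof
    assume H: "\<forall>s\<in>{1..p}. (i + s, j + inv_into {1..p} \<sigma> s) \<in> M"
    show "\<forall>t\<in>{1..p}. (i + \<sigma> t, j + t) \<in> M"
    proof
      fix t assume t: "t \<in> {1..p}"
      then have "\<sigma> t \<in> {1..p}" using sur by blast
      then show "(i + \<sigma> t, j + t) \<in> M" using H inv_into_f_f[OF inj t] by force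
    qed
  next
    assume H: "\<forall>t\<in>{1..p}. (i + \<sigma> t, j + t) \<in> M"
    show "\<forall>s\<in>{1..p}. (i + s, j + inv_into {1..p} \<sigma> s) \<in> M"
    proof
      fix s assume s: "s \<in> {1..p}"
      then have s': "s \<in> \<sigma> ` {1..p}" using sur by simp
      have "inv_into {1..p} \<sigma> s \<in> {1..p}" using inv_into_into[OF s'] .
      then show "(i + s, j + inv_into {1..p} \<sigma> s) \<in> M" using H f_inv_into_f[OF s'] by force
    qed
  qed
  then show ?thesis unfolding contains_at_def cont_def by simp
qed

lemma cont_arc: "cont p \<sigma> M i j \<Longrightarrow> t \<in> {1..p} \<Longrightarrow> (i + \<sigma> t, j + t) \<in> M"
  unfolding cont_def by blast

lemma occ_cont:
  assumes "bij_betw \<sigma> {1..p} {1..p}"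
  shows "occurrences p \<sigma> M = card {(i,j). cont p \<sigma> M i j}"
proof -
  have "{(i,j). contains_at p \<sigma> M i j} = {(i,j). cont p \<sigma> M i j}" using cont_eq[OF assms] by auto
  then show ?thesis unfolding occurrences_def by simp
qed

lemma cont_fin:
  assumes m: "is_matching n M" and p: "1 \<le> p"
  shows "finite {(i,j). cont p \<sigma> M i j}"
proof -
  have "{(i,j). cont p \<sigma> M i j} \<subseteq> {..2*n} \<times> {..2*n}"
  proof safe
    fix i j assume "cont p \<sigma> M i j"
    moreover have "1 \<in> {1..p}" using p by simp
    ultimately have "(i + \<sigma> 1, j + 1) \<in> M" unfolding cont_def by blast
    then show "i \<le> 2*n" "j \<le> 2*n" using match_arc[OF m] by fastforce+
  qed
  then show ?thesis using finite_subset by blast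
qed

lemma occ_letw_le:
  assumes m: "is_matching n M" and p: "1 \<le> p"
    and b1: "bij_betw \<sigma> {1..p} {1..p}" and b2: "bij_betw \<sigma>' {1..p} {1..p}"
    and rel: "\<forall>t\<in>{1..p}. \<sigma>' t = Suc p - \<sigma> t"
  shows "occurrences p \<sigma> M \<le> occurrences p \<sigma>' (letw M)"
proof -
  interpret bnd "is_start M" "2*n" by (rule bnd_start[OF m])
  let ?P = "is_start M"
  let ?r = "run_reflect ?P"
  let ?A = "{(i,j). cont p \<sigma> M i j}"
  let ?B = "{(i,j). cont p \<sigma>' (letw M) i j}"
  define h where "h = (\<lambda>(i::nat,j::nat). (?r (i+p) - 1, j))"
  have sur: "\<sigma> ` {1..p} = {1..p}" using b1 by (auto simp: bij_betw_def)
  have starts: "?P (i+s)" if A: "cont p \<sigma> M i j" and s: "s \<in> {1..p}" for i j s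
  proof -
    have "s \<in> \<sigma> ` {1..p}" using s sur by simp
    then obtain t where t: "t \<in> {1..p}" "\<sigma> t = s" by blast
    then have "(i+s, j+t) \<in> M" using A unfolding cont_def by auto
    then show ?thesis unfolding is_start_def by blast
  qed
  have inj: "inj_on h ?A"
  proof (rule inj_onI)
    fix x y assume x: "x \<in> ?A" and y: "y \<in> ?A" and e: "h x = h y"
    obtain i1 j1 i2 j2 where xy: "x = (i1,j1)" "y = (i2,j2)" by force
    have s1: "?P (i1+p)" using starts[of i1 j1 p] x xy p by auto
    have s2: "?P (i2+p)" using starts[of i2 j2 p] y xy p by auto
    have "?r (i1+p) \<ge> 1" "?r (i2+p) \<ge> 1" using rr_P[OF s1] rr_P[OF s2] start_bnd[OF m] by auto
    then have "?r (i1+p) = ?r (i2+p)" "j1 = j2" using e xy unfolding h_def by auto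
    then show "x = y" using rr_inj[OF s1 s2] xy by simp
  qed
  have img: "h ` ?A \<subseteq> ?B"
  proof
    fix x assume "x \<in> h ` ?A"
    then obtain i j where A: "cont p \<sigma> M i j" and x: "x = h (i,j)" by auto
    define R where "R = run_of ?P (i+1)"
    have s1: "?P (i+1)" using starts[OF A, of 1] p by simp
    have inR: "i + s \<in> R" if s: "s \<in> {1..p}" for s
      unfolding R_def run_mem
    proof (intro allI impI)
      fix z assume "min (i+1) (i+s) \<le> z \<and> z \<le> max (i+1) (i+s)"
      then have "z - i \<in> {1..p}" "z = i + (z - i)" using s by auto
      then show "?P z" using starts[OF A, of "z-i"] by metis
    qed
    define c where "c = Min R + Max R"
    have rs: "?r (i+s) = c - (i+s)" if s: "s \<in> {1..p}" for s
      using rr_eq[of "i+s" "i+1"] inR[OF s] unfolding R_def c_def by simp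
    have fR: "finite R" unfolding R_def by (rule run_finite[OF bnd])
    have i1: "i + 1 \<in> R" using inR[of 1] p by simp
    have ip: "i + p \<in> R" using inR[of p] p by simp
    have "Min R \<in> R" using Min_in[OF fR] i1 by blast
    then have "?P (Min R)" using run_P unfolding R_def by metis
    then have "Min R \<ge> 1" using start_bnd[OF m] by blast
    moreover have "Max R \<ge> i + p" using Max_ge[OF fR ip] .
    ultimately have c: "c \<ge> i + p + 1" unfolding c_def by simp
    have rp: "?r (i+p) = c - (i+p)" using rs[of p] p by simp
    have r1: "?r (i+1) = c - (i+1)" using rs[of 1] p by simp
    have "cont p \<sigma>' (letw M) (?r (i+p) - 1) j"
      unfolding cont_def
    proof (intro conjI ballI)
      fix t assume t: "t \<in> {1..p}"
      have st: "\<sigma> t \<in> {1..p}" using t sur by blast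
      have "(i + \<sigma> t, j + t) \<in> M" using A t unfolding cont_def by auto
      then have "(?r (i + \<sigma> t), j + t) \<in> letw M" unfolding letw_mem by blast
      moreover have "?r (i + \<sigma> t) = ?r (i+p) - 1 + \<sigma>' t"
        using rs[OF st] rp rel t st c by auto
      ultimately show "(?r (i+p) - 1 + \<sigma>' t, j + t) \<in> letw M" by simp
    next
      have st: "\<sigma> 1 \<in> {1..p}" using p sur by auto
      have a: "(i + \<sigma> 1, j + 1) \<in> M" using cont_arc[OF A, of 1] p by simp
      have sa: "?P (i + \<sigma> 1)" using a unfolding is_start_def by blast
      have Ra: "run_of ?P (i + \<sigma> 1) = R" using run_same inR[OF st] unfolding R_def by blast
      have "?r (i+1) \<in> R" using rr_in[OF s1] unfolding R_def .
      then have "?r (i+1) < j + 1"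
        using run_before[OF sa match_not_start[OF m a]] match_arc[OF m a] Ra by blast
      then show "?r (i+p) - 1 + p \<le> j" using r1 rp c by simp
    qed
    then show "x \<in> ?B" using x unfolding h_def by simp
  qed
  have "card ?A \<le> card ?B"
    using card_inj_on_le[OF inj img cont_fin[OF letw_matching[OF m] p]] .
  then show ?thesis using occ_cont[OF b1] occ_cont[OF b2] by simp
qed


lemma occ_retw_le:
  assumes m: "is_matching n M" and p: "1 \<le> p"
    and b1: "bij_betw \<sigma> {1..p} {1..p}" and b2: "bij_betw \<sigma>' {1..p} {1..p}"
    and rel: "\<forall>t\<in>{1..p}. \<sigma>' t = \<sigma> (Suc p - t)"
  shows "occurrences p \<sigma> M \<le> occurrences p \<sigma>' (retw M)"
proof -
  interpret bnd "is_end M" "2*n" by (rule bnd_end[OF m])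
  let ?P = "is_end M"
  let ?r = "run_reflect ?P"
  let ?A = "{(i,j). cont p \<sigma> M i j}"
  let ?B = "{(i,j). cont p \<sigma>' (retw M) i j}"
  define h where "h = (\<lambda>(i::nat,j::nat). (i, ?r (j+p) - 1))"
  have sur: "\<sigma> ` {1..p} = {1..p}" using b1 by (auto simp: bij_betw_def)
  have ends: "?P (j+s)" if A: "cont p \<sigma> M i j" and s: "s \<in> {1..p}" for i j s
    using cont_arc[OF A s] unfolding is_end_def by blast
  have inj: "inj_on h ?A"
  proof (rule inj_onI)
    fix x y assume x: "x \<in> ?A" and y: "y \<in> ?A" and e: "h x = h y"
    obtain i1 j1 i2 j2 where xy: "x = (i1,j1)" "y = (i2,j2)" by force
    have s1: "?P (j1+p)" using ends[of i1 j1 p] x xy p by auto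
    have s2: "?P (j2+p)" using ends[of i2 j2 p] y xy p by auto
    have "?r (j1+p) \<ge> 1" "?r (j2+p) \<ge> 1" using rr_P[OF s1] rr_P[OF s2] end_bnd[OF m] by auto
    then have "?r (j1+p) = ?r (j2+p)" "i1 = i2" using e xy unfolding h_def by auto
    then show "x = y" using rr_inj[OF s1 s2] xy by simp
  qed
  have img: "h ` ?A \<subseteq> ?B"
  proof
    fix x assume "x \<in> h ` ?A"
    then obtain i j where A: "cont p \<sigma> M i j" and x: "x = h (i,j)" by auto
    define R where "R = run_of ?P (j+1)"
    have s1: "?P (j+1)" using ends[OF A, of 1] p by simp
    have inR: "j + s \<in> R" if s: "s \<in> {1..p}" for s
      unfolding R_def run_mem
    proof (intro allI impI)
      fix z assume "min (j+1) (j+s) \<le> z \<and> z \<le> max (j+1) (j+s)"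
      then have "z - j \<in> {1..p}" "z = j + (z - j)" using s by auto
      then show "?P z" using ends[OF A, of "z-j"] by metis
    qed
    define c where "c = Min R + Max R"
    have rs: "?r (j+s) = c - (j+s)" if s: "s \<in> {1..p}" for s
      using rr_eq[of "j+s" "j+1"] inR[OF s] unfolding R_def c_def by simp
    have fR: "finite R" unfolding R_def by (rule run_finite[OF bnd])
    have i1: "j + 1 \<in> R" using inR[of 1] p by simp
    have ip: "j + p \<in> R" using inR[of p] p by simp
    have "Min R \<in> R" using Min_in[OF fR] i1 by blast
    then have "?P (Min R)" using run_P unfolding R_def by metis
    then have "Min R \<ge> 1" using end_bnd[OF m] by blast
    moreover have "Max R \<ge> j + p" using Max_ge[OF fR ip] .
    ultimately have c: "c \<ge> j + p + 1" unfolding c_def by simp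
    have rp: "?r (j+p) = c - (j+p)" using rs[of p] p by simp
    have "cont p \<sigma>' (retw M) i (?r (j+p) - 1)"
      unfolding cont_def
    proof (intro conjI ballI)
      fix t assume t: "t \<in> {1..p}"
      define u where "u = Suc p - t"
      have u: "u \<in> {1..p}" using t u_def by auto
      have "(i + \<sigma> u, j + u) \<in> M" using cont_arc[OF A u] .
      then have "(i + \<sigma> u, ?r (j + u)) \<in> retw M" unfolding retw_mem by blast
      moreover have "?r (j + u) = ?r (j+p) - 1 + t"
        using rs[OF u] rp t c u_def by auto
      moreover have "\<sigma>' t = \<sigma> u" using rel t u_def by simp
      ultimately show "(i + \<sigma>' t, ?r (j+p) - 1 + t) \<in> retw M" by simp
    next
      have "p \<in> \<sigma> ` {1..p}" using p sur by auto
      then obtain t0 where t0: "t0 \<in> {1..p}" "\<sigma> t0 = p" by blast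
      have a: "(i + p, j + t0) \<in> M" using cont_arc[OF A t0(1)] t0(2) by simp
      have sa: "?P (j + t0)" using a unfolding is_end_def by blast
      have Ra: "run_of ?P (j + t0) = R" using run_same inR[OF t0(1)] unfolding R_def by blast
      have sp: "?P (j+p)" using ends[OF A, of p] p by simp
      have "?r (j+p) \<in> R" using rr_in[OF sp] run_same[OF ip[unfolded R_def]] unfolding R_def by simp
      then have "i + p < ?r (j+p)"
        using run_after[OF sa match_not_end[OF m a]] match_arc[OF m a] Ra by blast
      then show "i + p \<le> ?r (j+p) - 1" by simp
    qed
    then show "x \<in> ?B" using x unfolding h_def by simp
  qed
  have "card ?A \<le> card ?B"
    using card_inj_on_le[OF inj img cont_fin[OF retw_matching[OF m] p]] .
  then show ?thesis using occ_cont[OF b1] occ_cont[OF b2] by simp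
qed


lemma transfer:
  assumes H: "\<And>M. is_matching n M \<Longrightarrow> is_matching n (h M) \<and> h (h M) = M
     \<and> occurrences p \<pi> (h M) = occurrences p \<tau> M \<and> occurrences p \<tau> (h M) = occurrences p \<pi> M"
  shows "a_nkm p \<pi> \<tau> n k m = a_nkm p \<tau> \<pi> n k m" "a_nk p \<pi> n k = a_nk p \<tau> n k"
proof -
  let ?A = "{M. is_matching n M \<and> occurrences p \<tau> M = k \<and> occurrences p \<pi> M = m}"
  let ?B = "{M. is_matching n M \<and> occurrences p \<pi> M = k \<and> occurrences p \<tau> M = m}"
  have "bij_betw h ?A ?B"
    by (rule bij_betw_byWitness[where f'=h]) (use H in auto)
  then have "card ?A = card ?B" by (rule bij_betw_same_card)
  then show "a_nkm p \<pi> \<tau> n k m = a_nkm p \<tau> \<pi> n k m" unfolding a_nkm_def by simp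
  let ?C = "{M. is_matching n M \<and> occurrences p \<tau> M = k}"
  let ?D = "{M. is_matching n M \<and> occurrences p \<pi> M = k}"
  have "bij_betw h ?C ?D"
    by (rule bij_betw_byWitness[where f'=h]) (use H in auto)
  then have "card ?C = card ?D" by (rule bij_betw_same_card)
  then show "a_nk p \<pi> n k = a_nk p \<tau> n k" unfolding a_nk_def by simp
qed

lemma run_int:
  assumes "\<And>y. P y \<longleftrightarrow> y \<in> {lo..hi}" "x \<in> {lo..hi}"
  shows "run_reflect P x = lo + hi - x"
proof -
  have R: "run_of P x = {lo..hi}"
  proof (rule set_eqI)
    fix y show "y \<in> run_of P x \<longleftrightarrow> y \<in> {lo..hi}"
    proof
      assume "y \<in> run_of P x" then show "y \<in> {lo..hi}" using run_P assms(1) by blast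
    next
      assume "y \<in> {lo..hi}" then show "y \<in> run_of P x" unfolding run_mem using assms by auto
    qed
  qed
  have "lo \<le> hi" using assms(2) by simp
  then have "Min {lo..hi} = lo" "Max {lo..hi} = hi"
    by (auto intro: Min_eqI Max_eqI)
  then show ?thesis unfolding run_reflect_def R by simp
qed

lemma pat_mem: "(a,b) \<in> pattern_matching p \<tau> \<longleftrightarrow> (\<exists>t\<in>{1..p}. a = \<tau> t \<and> b = p + t)"
  unfolding pattern_matching_def by auto

lemma pat_start:
  assumes "bij_betw \<tau> {1..p} {1..p}"
  shows "is_start (pattern_matching p \<tau>) x \<longleftrightarrow> x \<in> {1..p}"
proof -
  have sur: "\<tau> ` {1..p} = {1..p}" using assms by (auto simp: bij_betw_def)
  have "is_start (pattern_matching p \<tau>) x \<longleftrightarrow> x \<in> \<tau> ` {1..p}"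
    unfolding is_start_def pat_mem by auto
  then show ?thesis using sur by simp
qed

lemma pat_end:
  shows "is_end (pattern_matching p \<tau>) x \<longleftrightarrow> x \<in> {p+1..p+p}"
proof -
  have "is_end (pattern_matching p \<tau>) x \<longleftrightarrow> (\<exists>t\<in>{1..p}. x = p + t)"
    unfolding is_end_def pat_mem by auto
  also have "\<dots> \<longleftrightarrow> x \<in> {p+1..p+p}"
    apply (rule iffI)
     apply force
    apply (rule bexI[where x="x - p"])
     apply auto
    done
  finally show ?thesis .
qed

lemma pat_letw:
  assumes b: "bij_betw \<tau> {1..p} {1..p}" and e: "pattern_matching p \<pi> = letw (pattern_matching p \<tau>)"
  shows "\<forall>t\<in>{1..p}. \<pi> t = Suc p - \<tau> t"
proof
  fix t assume t: "t \<in> {1..p}"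
  have "(\<pi> t, p + t) \<in> pattern_matching p \<pi>" using t unfolding pat_mem by blast
  then obtain a where a: "(a, p+t) \<in> pattern_matching p \<tau>" "\<pi> t = run_reflect (is_start (pattern_matching p \<tau>)) a"
    unfolding e letw_mem by blast
  have "a = \<tau> t" using a(1) unfolding pat_mem by auto
  moreover have "\<tau> t \<in> {1..p}" using b t by (auto simp: bij_betw_def)
  ultimately show "\<pi> t = Suc p - \<tau> t"
    using a(2) run_int[of "is_start (pattern_matching p \<tau>)" 1 p a] pat_start[OF b] by simp
qed

lemma pat_retw:
  assumes b: "bij_betw \<tau> {1..p} {1..p}" and e: "pattern_matching p \<pi> = retw (pattern_matching p \<tau>)"
  shows "\<forall>t\<in>{1..p}. \<pi> t = \<tau> (Suc p - t)"
proof
  fix t assume t: "t \<in> {1..p}"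
  have "(\<pi> t, p + t) \<in> pattern_matching p \<pi>" using t unfolding pat_mem by blast
  then obtain c where c: "(\<pi> t, c) \<in> pattern_matching p \<tau>" "p + t = run_reflect (is_end (pattern_matching p \<tau>)) c"
    unfolding e retw_mem by blast
  obtain u where u: "u \<in> {1..p}" "\<pi> t = \<tau> u" "c = p + u" using c(1) unfolding pat_mem by auto
  have "c \<in> {p+1..p+p}" using u by simp
  then have "p + t = (p+1) + (p+p) - c"
    using c(2) run_int[of "is_end (pattern_matching p \<tau>)" "p+1" "p+p" c] pat_end by simp
  moreover have "1 \<le> u" "u \<le> p" "1 \<le> t" "t \<le> p" using u t by auto
  ultimately have "u = Suc p - t" using u(3) by linarith
  then show "\<pi> t = \<tau> (Suc p - t)" using u by simp
qed

theorem lemma1: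
  fixes p :: nat and \<pi> \<tau> :: "nat \<Rightarrow> nat"
  assumes "bij_betw \<pi> {1..p} {1..p}" and "bij_betw \<tau> {1..p} {1..p}"
    and "pattern_matching p \<pi> = letw (pattern_matching p \<tau>)
         \<or> pattern_matching p \<pi> = retw (pattern_matching p \<tau>)"
  shows "(\<forall>n k m. a_nkm p \<pi> \<tau> n k m = a_nkm p \<tau> \<pi> n k m)
       \<and> (\<forall>n k. a_nk p \<pi> n k = a_nk p \<tau> n k)"
proof -
  note bp = assms(1) and bt = assms(2)
  have sp: "\<pi> t \<in> {1..p}" "\<tau> t \<in> {1..p}" if "t \<in> {1..p}" for t
    using bp bt that by (auto simp: bij_betw_def)
  have key: "\<exists>h. \<forall>n M. is_matching n M \<longrightarrow> is_matching n (h M) \<and> h (h M) = M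
     \<and> occurrences p \<pi> (h M) = occurrences p \<tau> M \<and> occurrences p \<tau> (h M) = occurrences p \<pi> M"
  proof (cases "p = 0")
    case True
    have "occurrences p \<pi> M = occurrences p \<tau> M" for M
      unfolding occurrences_def contains_at_def True by simp
    then show ?thesis by (intro exI[of _ id]) simp
  next
    case False
    then have p: "1 \<le> p" by simp
    show ?thesis using assms(3)
    proof
      assume e: "pattern_matching p \<pi> = letw (pattern_matching p \<tau>)"
      have r1: "\<forall>t\<in>{1..p}. \<pi> t = Suc p - \<tau> t" using pat_letw[OF bt e] .
      have r2: "\<forall>t\<in>{1..p}. \<tau> t = Suc p - \<pi> t" using r1 sp by fastforce
      show ?thesis
      proof (intro exI[of _ letw] allI impI conjI)
        fix n M assume m: "is_matching n M"
        have m2: "is_matching n (letw M)" using letw_matching[OF m] .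
        show "is_matching n (letw M)" by (fact m2)
        show "letw (letw M) = M" using letw_invol[OF m] .
        show "occurrences p \<pi> (letw M) = occurrences p \<tau> M"
          using occ_letw_le[OF m p bt bp r1] occ_letw_le[OF m2 p bp bt r2] letw_invol[OF m] by simp
        show "occurrences p \<tau> (letw M) = occurrences p \<pi> M"
          using occ_letw_le[OF m p bp bt r2] occ_letw_le[OF m2 p bt bp r1] letw_invol[OF m] by simp
      qed
    next
      assume e: "pattern_matching p \<pi> = retw (pattern_matching p \<tau>)"
      have r1: "\<forall>t\<in>{1..p}. \<pi> t = \<tau> (Suc p - t)" using pat_retw[OF bt e] .
      have r2: "\<forall>t\<in>{1..p}. \<tau> t = \<pi> (Suc p - t)"
      proof
        fix t assume t: "t \<in> {1..p}"
        then have "Suc p - t \<in> {1..p}" "Suc p - (Suc p - t) = t" by auto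
        then show "\<tau> t = \<pi> (Suc p - t)" using r1 by metis
      qed
      show ?thesis
      proof (intro exI[of _ retw] allI impI conjI)
        fix n M assume m: "is_matching n M"
        have m2: "is_matching n (retw M)" using retw_matching[OF m] .
        show "is_matching n (retw M)" by (fact m2)
        show "retw (retw M) = M" using retw_invol[OF m] .
        show "occurrences p \<pi> (retw M) = occurrences p \<tau> M"
          using occ_retw_le[OF m p bt bp r1] occ_retw_le[OF m2 p bp bt r2] retw_invol[OF m] by simp
        show "occurrences p \<tau> (retw M) = occurrences p \<pi> M"
          using occ_retw_le[OF m p bp bt r2] occ_retw_le[OF m2 p bt bp r1] retw_invol[OF m] by simp
      qed
    qed
  qed
  then obtain h where h: "\<And>n M. is_matching n M \<Longrightarrow> is_matching n (h M) \<and> h (h M) = M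
     \<and> occurrences p \<pi> (h M) = occurrences p \<tau> M \<and> occurrences p \<tau> (h M) = occurrences p \<pi> M"
    by blast
  show ?thesis
  proof (intro conjI allI)
    fix n k m
    show "a_nkm p \<pi> \<tau> n k m = a_nkm p \<tau> \<pi> n k m" by (rule transfer(1)) (rule h)
    show "a_nk p \<pi> n k = a_nk p \<tau> n k" by (rule transfer(2)) (rule h)
  qed
qed

end
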